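(* Let $U$ be a subgroup of $G^*$. Then there exists a resolute and $U$-symmetric matching mechanism if and only if $C^U(p)\neq\varnothing$ for every $p\in\mathcal{P}$.
   Context: Fix $n\ge 2$, $W=\{1,\dots,n\}$, $M=\{n+1,\dots,2n\}$, $I=W\cup M$. Permutations compose right-to-left. A preference profile is a function $p$ on $I$ assigning to each $x\in W$ a linear order $p(x)$ on $M$ and to each $y\in M$ a linear order $p(y)$ on $W$; $\mathcal{P}$ is the set of preference profiles. A matching is a permutation $\mu$ of $I$ with $\mu(W)=M$, $\mu(M)=W$, $\mu(\mu(z))=z$; $\mathcal{M}$ is the set of matchings. $G^*=\{\varphi\in\mathrm{Sym}(I):\{\varphi(W),\varphi(M)\}=\{W,M\}\}$. For a linear order $R$ on $X\subseteq I$ and $\varphi\in\mathrm{Sym}(I)$, $\varphi R$ is the relation on $\varphi(X)$ with $(a,b)\in\varphi R$ iff $(\varphi^{-1}(a),\varphi^{-1}(b))\in R$. For $\varphi\in G^*$, $p^\varphi(z)=\varphi\,p(\varphi^{-1}(z))$; $\mu^\varphi=\varphi\mu\varphi^{-1}$; $S^\varphi=\{\mu^\varphi:\mu\in S\}$. A matching mechanism is a correspondence $F$ from $\mathcal{P}$ to $\mathcal{M}$; resolute if $|F(p)|=1$ for all $p$; $U$-symmetric if $F(p^\varphi)=F(p)^\varphi$ for all $p$, $\varphi\in U$. $\mathrm{Stab}_U(p)=\{\varphi\in U:p^\varphi=p\}$ and $C^U(p)=\{\mu\in\mathcal{M}:\mu^\varphi=\mu\text{ for all }\varphi\in\mathrm{Stab}_U(p)\}$.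 *)

theory Defs
  imports "HOL-Combinatorics.Permutations"
begin

definition Wset :: "nat \<Rightarrow> nat set" where "Wset n = {1..n}"
definition Mset :: "nat \<Rightarrow> nat set" where "Mset n = {n+1..2*n}"
definition Iset :: "nat \<Rightarrow> nat set" where "Iset n = Wset n \<union> Mset n"

text \<open>Preference profiles: p z is a linear order (relation) on M for z in W and on W for z in M.
  By convention p z = {} outside I, so that profiles are determined by their values on I.\<close>
definition profiles :: "nat \<Rightarrow> (nat \<Rightarrow> (nat \<times> nat) set) set" where
  "profiles n = {p. (\<forall>x\<in>Wset n. linear_order_on (Mset n) (p x))
                  \<and> (\<forall>y\<in>Mset n. linear_order_on (Wset n) (p y))
                  \<and> (\<forall>z. z \<notin> Iset n \<longrightarrow> p z = {})}"

definition matchings :: "nat \<Rightarrow> (nat \<Rightarrow> nat) set" where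
  "matchings n = {\<mu>. \<mu> permutes Iset n \<and> \<mu> ` Wset n = Mset n \<and> \<mu> ` Mset n = Wset n
                    \<and> (\<forall>z\<in>Iset n. \<mu> (\<mu> z) = z)}"

definition Gstar :: "nat \<Rightarrow> (nat \<Rightarrow> nat) set" where
  "Gstar n = {\<phi>. \<phi> permutes Iset n \<and> {\<phi> ` Wset n, \<phi> ` Mset n} = {Wset n, Mset n}}"

definition rel_act :: "(nat \<Rightarrow> nat) \<Rightarrow> (nat \<times> nat) set \<Rightarrow> (nat \<times> nat) set" where
  "rel_act \<phi> R = {(a, b). (inv \<phi> a, inv \<phi> b) \<in> R}"

definition profile_act :: "(nat \<Rightarrow> nat) \<Rightarrow> (nat \<Rightarrow> (nat \<times> nat) set) \<Rightarrow> (nat \<Rightarrow> (nat \<times> nat) set)" where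
  "profile_act \<phi> p = (\<lambda>z. rel_act \<phi> (p (inv \<phi> z)))"

definition matching_act :: "(nat \<Rightarrow> nat) \<Rightarrow> (nat \<Rightarrow> nat) \<Rightarrow> (nat \<Rightarrow> nat)" where
  "matching_act \<phi> \<mu> = \<phi> \<circ> \<mu> \<circ> inv \<phi>"

definition is_subgroup_of :: "(nat \<Rightarrow> nat) set \<Rightarrow> (nat \<Rightarrow> nat) set \<Rightarrow> bool" where
  "is_subgroup_of U G \<longleftrightarrow> U \<subseteq> G \<and> id \<in> U
     \<and> (\<forall>\<phi>\<in>U. \<forall>\<psi>\<in>U. \<phi> \<circ> \<psi> \<in> U) \<and> (\<forall>\<phi>\<in>U. inv \<phi> \<in> U)"

definition mechanism :: "nat \<Rightarrow> ((nat \<Rightarrow> (nat \<times> nat) set) \<Rightarrow> (nat \<Rightarrow> nat) set) \<Rightarrow> bool" where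
  "mechanism n F \<longleftrightarrow> (\<forall>p\<in>profiles n. F p \<subseteq> matchings n)"

definition resolute :: "nat \<Rightarrow> ((nat \<Rightarrow> (nat \<times> nat) set) \<Rightarrow> (nat \<Rightarrow> nat) set) \<Rightarrow> bool" where
  "resolute n F \<longleftrightarrow> (\<forall>p\<in>profiles n. card (F p) = 1)"

definition symmetric_wrt :: "nat \<Rightarrow> (nat \<Rightarrow> nat) set \<Rightarrow> ((nat \<Rightarrow> (nat \<times> nat) set) \<Rightarrow> (nat \<Rightarrow> nat) set) \<Rightarrow> bool" where
  "symmetric_wrt n U F \<longleftrightarrow>
     (\<forall>p\<in>profiles n. \<forall>\<phi>\<in>U. F (profile_act \<phi> p) = matching_act \<phi> ` F p)"

definition Stab :: "(nat \<Rightarrow> nat) set \<Rightarrow> (nat \<Rightarrow> (nat \<times> nat) set) \<Rightarrow> (nat \<Rightarrow> nat) set" where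
  "Stab U p = {\<phi>\<in>U. profile_act \<phi> p = p}"

definition CU :: "nat \<Rightarrow> (nat \<Rightarrow> nat) set \<Rightarrow> (nat \<Rightarrow> (nat \<times> nat) set) \<Rightarrow> (nat \<Rightarrow> nat) set" where
  "CU n U p = {\<mu>\<in>matchings n. \<forall>\<phi>\<in>Stab U p. matching_act \<phi> \<mu> = \<mu>}"

end

theory Submission
  imports Defs
begin

lemma rel_act_comp: "bij f \<Longrightarrow> bij g \<Longrightarrow> rel_act (f \<circ> g) R = rel_act f (rel_act g R)"
  by (auto simp: rel_act_def o_inv_distrib)

lemma rel_act_id: "rel_act id R = R"
  by (simp add: rel_act_def)

lemma profile_act_comp: "bij f \<Longrightarrow> bij g \<Longrightarrow> profile_act (f \<circ> g) p = profile_act f (profile_act g p)"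
  by (auto simp: profile_act_def rel_act_comp o_inv_distrib)

lemma profile_act_id: "profile_act id p = p"
  by (simp add: profile_act_def rel_act_id)

lemma matching_act_comp: "bij f \<Longrightarrow> bij g \<Longrightarrow> matching_act (f \<circ> g) m = matching_act f (matching_act g m)"
  by (simp add: matching_act_def o_inv_distrib o_assoc)

lemma matching_act_id: "matching_act id m = m"
  by (simp add: matching_act_def)

lemma lin_rel_act:
  assumes b: "bij f" and l: "linear_order_on A R"
  shows "linear_order_on (f ` A) (rel_act f R)"
proof -
  have fi: "\<And>x. f (inv f x) = x" using b by (simp add: bij_is_surj surj_f_inv_f)
  have if': "\<And>x. inv f (f x) = x" using b by (simp add: bij_is_inj)
  have ii: "\<And>x y. inv f x = inv f y \<Longrightarrow> x = y" by (metis fi)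
  have sub: "R \<subseteq> A \<times> A" and rf: "refl_on A R" and tr: "trans R" and an: "antisym R"
    and tot: "total_on A R"
    using l unfolding linear_order_on_def partial_order_on_def preorder_on_def by auto
  have "rel_act f R \<subseteq> f ` A \<times> f ` A"
  proof
    fix x assume "x \<in> rel_act f R"
    then obtain a b where x: "x = (a,b)" "(inv f a, inv f b) \<in> R" by (auto simp: rel_act_def)
    then have "inv f a \<in> A" "inv f b \<in> A" using sub by auto
    then have "f (inv f a) \<in> f ` A" "f (inv f b) \<in> f ` A" by auto
    then show "x \<in> f ` A \<times> f ` A" using x fi by simp
  qed
  moreover have "refl_on (f ` A) (rel_act f R)"
    unfolding refl_on_def rel_act_def using rf by (auto simp: if' refl_on_def)
  moreover have "trans (rel_act f R)"
    unfolding trans_def rel_act_def using tr by (auto dest: transD)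
  moreover have "antisym (rel_act f R)"
    unfolding antisym_def rel_act_def using an by (auto dest: antisymD intro: ii)
  moreover have "total_on (f ` A) (rel_act f R)"
    unfolding total_on_def rel_act_def using tot by (auto simp: if' total_on_def)
  ultimately show ?thesis
    unfolding linear_order_on_def partial_order_on_def preorder_on_def by blast
qed

lemma Gstar_cases:
  assumes "\<phi> \<in> Gstar n"
  shows "\<phi> permutes Iset n \<and> ((\<phi> ` Wset n = Wset n \<and> \<phi> ` Mset n = Mset n) \<or>
          (\<phi> ` Wset n = Mset n \<and> \<phi> ` Mset n = Wset n))"
  using assms unfolding Gstar_def by (auto simp: doubleton_eq_iff)

lemma inv_in_image:
  assumes "bij f" "f ` A = B" "z \<in> B" shows "inv f z \<in> A"
  using assms by (auto simp: bij_is_inj)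

lemma profile_closed:
  assumes g: "\<phi> \<in> Gstar n" and p: "p \<in> profiles n"
  shows "profile_act \<phi> p \<in> profiles n"
proof -
  have pm: "\<phi> permutes Iset n" using Gstar_cases[OF g] by blast
  have b: "bij \<phi>" using pm permutes_bij by blast
  have ipm: "inv \<phi> permutes Iset n" using permutes_inv[OF pm] .
  have pW: "\<forall>x\<in>Wset n. linear_order_on (Mset n) (p x)"
   and pM: "\<forall>y\<in>Mset n. linear_order_on (Wset n) (p y)"
   and pO: "\<forall>z. z \<notin> Iset n \<longrightarrow> p z = {}" using p unfolding profiles_def by auto
  have A: "linear_order_on (Mset n) (profile_act \<phi> p x)" if x: "x \<in> Wset n" for x
    using Gstar_cases[OF g]
  proof (elim conjE disjE)
    assume "\<phi> ` Wset n = Wset n" "\<phi> ` Mset n = Mset n"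
    then show ?thesis using inv_in_image[OF b _ x] pW lin_rel_act[OF b] by (simp add: profile_act_def) metis
  next
    assume "\<phi> ` Wset n = Mset n" "\<phi> ` Mset n = Wset n"
    then show ?thesis using inv_in_image[OF b _ x] pM lin_rel_act[OF b] by (simp add: profile_act_def) metis
  qed
  have B: "linear_order_on (Wset n) (profile_act \<phi> p x)" if x: "x \<in> Mset n" for x
    using Gstar_cases[OF g]
  proof (elim conjE disjE)
    assume "\<phi> ` Wset n = Wset n" "\<phi> ` Mset n = Mset n"
    then show ?thesis using inv_in_image[OF b _ x] pM lin_rel_act[OF b] by (simp add: profile_act_def) metis
  next
    assume "\<phi> ` Wset n = Mset n" "\<phi> ` Mset n = Wset n"
    then show ?thesis using inv_in_image[OF b _ x] pW lin_rel_act[OF b] by (simp add: profile_act_def) metis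
  qed
  have C: "profile_act \<phi> p z = {}" if z: "z \<notin> Iset n" for z
  proof -
    have "inv \<phi> z = z" using permutes_not_in[OF ipm z] .
    then show ?thesis using pO z by (simp add: profile_act_def rel_act_def)
  qed
  show ?thesis using A B C unfolding profiles_def by blast
qed

lemma matching_closed:
  assumes g: "\<phi> \<in> Gstar n" and m: "\<mu> \<in> matchings n"
  shows "matching_act \<phi> \<mu> \<in> matchings n"
proof -
  have pm: "\<phi> permutes Iset n" using Gstar_cases[OF g] by blast
  have b: "bij \<phi>" using pm permutes_bij by blast
  have ipm: "inv \<phi> permutes Iset n" using permutes_inv[OF pm] .
  have mp: "\<mu> permutes Iset n" and mW: "\<mu> ` Wset n = Mset n" and mM: "\<mu> ` Mset n = Wset n"
    and mi: "\<forall>z\<in>Iset n. \<mu> (\<mu> z) = z" using m unfolding matchings_def by auto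
  have iW: "inv \<phi> ` (\<phi> ` A) = A" for A using b by (simp add: bij_is_inj image_comp)
  have P: "\<phi> \<circ> \<mu> \<circ> inv \<phi> permutes Iset n"
    by (intro permutes_compose ipm mp pm)
  have Q: "(\<phi> \<circ> \<mu> \<circ> inv \<phi>) ` Wset n = Mset n \<and> (\<phi> \<circ> \<mu> \<circ> inv \<phi>) ` Mset n = Wset n"
    using Gstar_cases[OF g]
  proof (elim conjE disjE)
    assume a: "\<phi> ` Wset n = Wset n" "\<phi> ` Mset n = Mset n"
    have "inv \<phi> ` Wset n = Wset n" "inv \<phi> ` Mset n = Mset n" using iW a by metis+
    then show ?thesis using a mW mM by (simp only: image_comp[symmetric])
  next
    assume a: "\<phi> ` Wset n = Mset n" "\<phi> ` Mset n = Wset n"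
    have "inv \<phi> ` Wset n = Mset n" "inv \<phi> ` Mset n = Wset n" using iW a by metis+
    then show ?thesis using a mW mM by (simp only: image_comp[symmetric])
  qed
  have R: "\<forall>z\<in>Iset n. (\<phi> \<circ> \<mu> \<circ> inv \<phi>) ((\<phi> \<circ> \<mu> \<circ> inv \<phi>) z) = z"
  proof
    fix z assume z: "z \<in> Iset n"
    have "inv \<phi> z \<in> Iset n" using permutes_in_image[OF ipm] z by blast
    then show "(\<phi> \<circ> \<mu> \<circ> inv \<phi>) ((\<phi> \<circ> \<mu> \<circ> inv \<phi>) z) = z"
      using mi b by (simp add: bij_is_inj bij_is_surj surj_f_inv_f)
  qed
  show ?thesis using P Q R unfolding matchings_def matching_act_def by blast
qed

theorem corollary1:
  fixes n :: nat and U :: "(nat \<Rightarrow> nat) set"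
  assumes "n \<ge> 2"
    and "is_subgroup_of U (Gstar n)"
  shows "(\<exists>F. mechanism n F \<and> resolute n F \<and> symmetric_wrt n U F)
           \<longleftrightarrow> (\<forall>p\<in>profiles n. CU n U p \<noteq> {})"
proof -
  have UG: "U \<subseteq> Gstar n" and idU: "id \<in> U" and cU: "\<And>f g. f \<in> U \<Longrightarrow> g \<in> U \<Longrightarrow> f \<circ> g \<in> U"
    and iU: "\<And>f. f \<in> U \<Longrightarrow> inv f \<in> U"
    using assms(2) unfolding is_subgroup_of_def by auto
  have bU: "bij f" if "f \<in> U" for f
    using that UG Gstar_cases permutes_bij by blast
  have lc: "inv f \<circ> f = id" if "f \<in> U" for f using bU[OF that] by (simp add: bij_is_inj)
  have rc: "f \<circ> inv f = id" if "f \<in> U" for f using bU[OF that] by (meson bij_is_surj surj_iff)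
  show ?thesis
  proof
    assume "\<exists>F. mechanism n F \<and> resolute n F \<and> symmetric_wrt n U F"
    then obtain F where mF: "mechanism n F" and rF: "resolute n F" and sF: "symmetric_wrt n U F" by blast
    show "\<forall>p\<in>profiles n. CU n U p \<noteq> {}"
    proof
      fix p assume p: "p \<in> profiles n"
      have "card (F p) = 1" using rF p unfolding resolute_def by blast
      then obtain \<mu> where Fp: "F p = {\<mu>}" by (rule card_1_singletonE)
      have "\<mu> \<in> matchings n" using mF p Fp unfolding mechanism_def by blast
      moreover have "matching_act \<phi> \<mu> = \<mu>" if "\<phi> \<in> Stab U p" for \<phi>
      proof -
        have "\<phi> \<in> U" "profile_act \<phi> p = p" using that unfolding Stab_def by auto
        then have "F p = matching_act \<phi> ` F p" using sF p unfolding symmetric_wrt_def by metis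
        then show ?thesis using Fp by simp
      qed
      ultimately have "\<mu> \<in> CU n U p" unfolding CU_def by blast
      then show "CU n U p \<noteq> {}" by blast
    qed
  next
    assume C: "\<forall>p\<in>profiles n. CU n U p \<noteq> {}"
    define orb where "orb q = (\<lambda>\<phi>. profile_act \<phi> q) ` U" for q
    define r where "r q = (SOME q'. q' \<in> orb q)" for q
    define m where "m q = (SOME \<mu>. \<mu> \<in> CU n U q)" for q
    define F where "F q = {matching_act \<psi> (m (r q)) | \<psi>. \<psi> \<in> U \<and> profile_act \<psi> (r q) = q}" for q
    have orb_self: "q \<in> orb q" for q unfolding orb_def using idU profile_act_id
      by (metis image_eqI)
    have orb_tr: "orb (profile_act \<phi> q) = orb q" if f: "\<phi> \<in> U" for \<phi> q
    proof
      show "orb (profile_act \<phi> q) \<subseteq> orb q"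
      proof
        fix x assume "x \<in> orb (profile_act \<phi> q)"
        then obtain \<psi> where "\<psi> \<in> U" "x = profile_act \<psi> (profile_act \<phi> q)" unfolding orb_def by blast
        then have "\<psi> \<circ> \<phi> \<in> U" "x = profile_act (\<psi> \<circ> \<phi>) q"
          using f cU bU profile_act_comp by auto
        then show "x \<in> orb q" unfolding orb_def by blast
      qed
    next
      show "orb q \<subseteq> orb (profile_act \<phi> q)"
      proof
        fix x assume "x \<in> orb q"
        then obtain \<psi> where ps: "\<psi> \<in> U" "x = profile_act \<psi> q" unfolding orb_def by blast
        have "profile_act (\<psi> \<circ> inv \<phi>) (profile_act \<phi> q) = profile_act (\<psi> \<circ> inv \<phi> \<circ> \<phi>) q"
          using profile_act_comp[of "\<psi> \<circ> inv \<phi>" \<phi>] ps f cU iU bU by auto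
        also have "\<psi> \<circ> inv \<phi> \<circ> \<phi> = \<psi>" using lc[OF f] by (simp add: o_assoc[symmetric])
        finally have "x = profile_act (\<psi> \<circ> inv \<phi>) (profile_act \<phi> q)" using ps(2) by metis
        moreover have "\<psi> \<circ> inv \<phi> \<in> U" using ps f cU iU by blast
        ultimately show "x \<in> orb (profile_act \<phi> q)" unfolding orb_def by blast
      qed
    qed
    have r_in: "r q \<in> orb q" for q unfolding r_def using orb_self by (metis someI)
    have r_tr: "r (profile_act \<phi> q) = r q" if "\<phi> \<in> U" for \<phi> q
      unfolding r_def using orb_tr[OF that] by simp
    have ex_psi: "\<exists>\<psi>\<in>U. profile_act \<psi> (r q) = q" for q
    proof -
      obtain \<phi> where f: "\<phi> \<in> U" "r q = profile_act \<phi> q" using r_in[of q] unfolding orb_def by blast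
      have "profile_act (inv \<phi>) (r q) = profile_act (inv \<phi> \<circ> \<phi>) q"
        using f profile_act_comp[of "inv \<phi>" \<phi>] iU bU by auto
      then have "profile_act (inv \<phi>) (r q) = q" using lc[OF f(1)] profile_act_id by simp
      then show ?thesis using iU f by blast
    qed
    have r_prof: "r q \<in> profiles n" if "q \<in> profiles n" for q
    proof -
      obtain \<phi> where "\<phi> \<in> U" "r q = profile_act \<phi> q" using r_in[of q] unfolding orb_def by blast
      then show ?thesis using profile_closed UG that by auto
    qed
    have m_CU: "m (r q) \<in> CU n U (r q)" if "q \<in> profiles n" for q
      unfolding m_def using C r_prof[OF that] by (metis ex_in_conv someI)
    have key: "F q = {matching_act \<psi> (m (r q))}"
      if q: "q \<in> profiles n" and ps: "\<psi> \<in> U" "profile_act \<psi> (r q) = q" for q \<psi>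
    proof
      show "{matching_act \<psi> (m (r q))} \<subseteq> F q" unfolding F_def using ps by blast
    next
      show "F q \<subseteq> {matching_act \<psi> (m (r q))}"
      proof
        fix x assume "x \<in> F q"
        then obtain \<psi>' where ps': "\<psi>' \<in> U" "profile_act \<psi>' (r q) = q" "x = matching_act \<psi>' (m (r q))"
          unfolding F_def by blast
        define \<sigma> where "\<sigma> = inv \<psi> \<circ> \<psi>'"
        have sU: "\<sigma> \<in> U" unfolding \<sigma>_def using ps ps' iU cU by blast
        have "profile_act \<sigma> (r q) = profile_act (inv \<psi>) q"
          unfolding \<sigma>_def using profile_act_comp[of "inv \<psi>" \<psi>'] ps ps' iU bU by auto
        also have "\<dots> = profile_act (inv \<psi> \<circ> \<psi>) (r q)"
          using profile_act_comp[of "inv \<psi>" \<psi>] ps iU bU by auto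
        also have "\<dots> = r q" using lc[OF ps(1)] profile_act_id by simp
        finally have "\<sigma> \<in> Stab U (r q)" using sU unfolding Stab_def by blast
        then have fix\<sigma>: "matching_act \<sigma> (m (r q)) = m (r q)" using m_CU[OF q] unfolding CU_def by blast
        have "\<psi> \<circ> \<sigma> = \<psi>'" unfolding \<sigma>_def using rc[OF ps(1)] by (simp add: o_assoc)
        then have "x = matching_act (\<psi> \<circ> \<sigma>) (m (r q))" using ps' by simp
        also have "\<dots> = matching_act \<psi> (matching_act \<sigma> (m (r q)))"
          using matching_act_comp bU ps sU by blast
        finally show "x \<in> {matching_act \<psi> (m (r q))}" using fix\<sigma> by simp
      qed
    qed
    have "mechanism n F"
      unfolding mechanism_def
    proof
      fix p assume p: "p \<in> profiles n"
      obtain \<psi> where ps: "\<psi> \<in> U" "profile_act \<psi> (r p) = p" using ex_psi by blast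
      have "m (r p) \<in> matchings n" using m_CU[OF p] unfolding CU_def by blast
      then have "matching_act \<psi> (m (r p)) \<in> matchings n" using matching_closed UG ps by blast
      then show "F p \<subseteq> matchings n" using key[OF p ps] by simp
    qed
    moreover have "resolute n F"
      unfolding resolute_def
    proof
      fix p assume p: "p \<in> profiles n"
      obtain \<psi> where ps: "\<psi> \<in> U" "profile_act \<psi> (r p) = p" using ex_psi by blast
      show "card (F p) = 1" using key[OF p ps] by simp
    qed
    moreover have "symmetric_wrt n U F"
      unfolding symmetric_wrt_def
    proof (intro ballI)
      fix p \<phi> assume p: "p \<in> profiles n" and f: "\<phi> \<in> U"
      obtain \<psi> where ps: "\<psi> \<in> U" "profile_act \<psi> (r p) = p" using ex_psi by blast
      define p' where "p' = profile_act \<phi> p"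
      have p': "p' \<in> profiles n" unfolding p'_def using profile_closed UG f p by blast
      have rp: "r p' = r p" unfolding p'_def using r_tr[OF f] .
      have "profile_act (\<phi> \<circ> \<psi>) (r p) = p'"
        unfolding p'_def using profile_act_comp[OF bU[OF f] bU[OF ps(1)]] ps(2) by simp
      moreover have "\<phi> \<circ> \<psi> \<in> U" using cU f ps by blast
      ultimately have "F p' = {matching_act (\<phi> \<circ> \<psi>) (m (r p'))}" using key[OF p'] rp by simp
      then have "F p' = {matching_act (\<phi> \<circ> \<psi>) (m (r p))}" using rp by simp
      also have "\<dots> = {matching_act \<phi> (matching_act \<psi> (m (r p)))}"
        using matching_act_comp[OF bU[OF f] bU[OF ps(1)]] by simp
      also have "\<dots> = matching_act \<phi> ` F p" using key[OF p ps] by simp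
      finally show "F (profile_act \<phi> p) = matching_act \<phi> ` F p" unfolding p'_def .
    qed
    ultimately show "\<exists>F. mechanism n F \<and> resolute n F \<and> symmetric_wrt n U F" by blast
  qed
qed

end
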